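(* Let $-\infty\le a<b\le\infty$, let $\kappa,\varphi:(a,b)\to\mathbb C$ be measurable with $\kappa\in L^2(a,b)$ and $\mathbb 1_{(a,c)}\varphi\in L^2(a,b)$ for every $c\in(a,b)$. Choose $c_0:=a<c_1<c_2<\dots<b$ with $\|\mathbb 1_{(c_n,b)}\kappa\|^2=2^{-n}\|\kappa\|^2$, $n\in\mathbb N$, and set $J_n=(c_{n-1},c_n)$, $\omega_n=\|\mathbb 1_{J_n}\kappa\|\cdot\|\mathbb 1_{J_n}\varphi\|$. Then \[ \lim_{n\to\infty}\omega_n=0\iff\lim_{t\nearrow b}\|\mathbb 1_{(a,t)}\varphi\|\cdot\|\mathbb 1_{(t,b)}\kappa\|=0 . \]
   Context: Norms are $L^2(a,b)$-norms; $\mathbb 1_E$ is the indicator function of $E$. *)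

theory Defs
  imports "HOL-Analysis.Analysis"
begin

definition L2norm :: "real set \<Rightarrow> (real \<Rightarrow> complex) \<Rightarrow> real" where
  "L2norm S f = sqrt (LINT x:S|lborel. (cmod (f x))^2)"

end

theory Submission
  imports Defs
begin


lemma half_bound: "w < (e::real) \<Longrightarrow> x \<le> q + 2*e \<Longrightarrow> x/2 + w \<le> (q + 2*e)/2 + e"
  by (simp add: field_simps)

lemma geo_conv:
  fixes w :: "nat \<Rightarrow> real"
  assumes nn: "\<And>n. 0 \<le> w n" and lim: "w \<longlonglongrightarrow> 0"
  shows "(\<lambda>n. \<Sum>k\<le>n. (1/2)^(n-k) * w k) \<longlonglongrightarrow> 0"
proof -
  define s where "s n = (\<Sum>k\<le>n. (1/2::real)^(n-k) * w k)" for n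
  have rec: "s (Suc n) = s n / 2 + w (Suc n)" for n
  proof -
    have "s (Suc n) = (\<Sum>k\<le>n. (1/2::real)^(Suc n-k) * w k) + w (Suc n)"
      unfolding s_def by (simp add: sum.atMost_Suc)
    also have "(\<Sum>k\<le>n. (1/2::real)^(Suc n-k) * w k) = (\<Sum>k\<le>n. (1/2::real)^(n-k) * w k) / 2"
      unfolding sum_divide_distrib by (rule sum.cong) (auto simp: Suc_diff_le)
    finally show ?thesis unfolding s_def by simp
  qed
  have snn: "0 \<le> s n" for n unfolding s_def using nn by (auto intro!: sum_nonneg)
  show ?thesis unfolding s_def[symmetric]
  proof (rule LIMSEQ_I)
    fix r :: real assume r: "0 < r"
    define e where "e = r / 4"
    have e: "0 < e" using r by (simp add: e_def)
    obtain N where N: "\<And>n. n \<ge> N \<Longrightarrow> w n < e"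
      using LIMSEQ_D[OF lim e] nn by force
    have bound: "s n \<le> (1/2)^(n-N) * s N + 2*e" if "N \<le> n" for n
      using that
    proof (induction n rule: dec_induct)
      case base then show ?case using e by simp
    next
      case (step m)
      have "s (Suc m) = s m / 2 + w (Suc m)" by (rule rec)
      also have "\<dots> \<le> ((1/2)^(m-N) * s N + 2*e)/2 + e"
      proof -
        have "w (Suc m) < e" using N[of "Suc m"] step(1) by simp
        moreover have "s m \<le> (1/2)^(m-N) * s N + 2*e" using step.IH .
        ultimately show ?thesis by (rule half_bound)
      qed
      also have "\<dots> = (1/2)^(Suc m-N) * s N + 2*e" using step(1)
        by (simp add: Suc_diff_le field_simps)
      finally show ?case .
    qed
    have "(\<lambda>n. (1/2::real)^n * s N) \<longlonglongrightarrow> 0"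
      by (intro tendsto_mult_left_zero LIMSEQ_power_zero) simp
    from LIMSEQ_D[OF this e] obtain M where M: "\<And>n. n \<ge> M \<Longrightarrow> (1/2::real)^n * s N < e"
      by (force simp: snn)
    show "\<exists>no. \<forall>n\<ge>no. norm (s n - 0) < r"
    proof (intro exI allI impI)
      fix n assume "N + M \<le> n"
      then have "s n \<le> (1/2)^(n-N) * s N + 2*e" "(1/2)^(n-N) * s N < e"
        using bound M[of "n-N"] by auto
      then show "norm (s n - 0) < r" using snn[of n] by (simp add: e_def)
    qed
  qed
qed



lemma I_add:
  fixes x y z :: ereal and g :: "real \<Rightarrow> real"
  assumes "x \<le> y" "y \<le> z" "set_integrable lborel (einterval x z) g"
  shows "(LINT t:einterval x z|lborel. g t) = (LINT t:einterval x y|lborel. g t) + (LINT t:einterval y z|lborel. g t)"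
proof -
  have xz: "x \<le> z" using assms(1,2) by (rule order_trans)
  show ?thesis
    using interval_integral_sum[of x y z g] assms xz
    by (simp add: interval_lebesgue_integrable_def interval_lebesgue_integral_def min_def max_def)
qed

lemma I_sub:
  fixes x y z w :: ereal and g :: "real \<Rightarrow> real"
  assumes "set_integrable lborel (einterval x w) g" "x \<le> y" "z \<le> w"
  shows "set_integrable lborel (einterval y z) g"
  by (rule set_integrable_subset[OF assms(1)]) (use assms in \<open>auto simp: einterval_def\<close>)

lemma I_nonneg:
  fixes g :: "real \<Rightarrow> real"
  assumes "\<And>t. 0 \<le> g t"
  shows "0 \<le> (LINT t:S|lborel. g t)"
  unfolding set_lebesgue_integral_def using assms
  by (intro integral_nonneg_AE) (auto simp: indicator_def)

lemma I_mono:
  fixes x y z w :: ereal and g :: "real \<Rightarrow> real"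
  assumes "set_integrable lborel (einterval x w) g" "x \<le> y" "y \<le> z" "z \<le> w" "\<And>t. 0 \<le> g t"
  shows "(LINT t:einterval y z|lborel. g t) \<le> (LINT t:einterval x w|lborel. g t)"
proof -
  have "(LINT t:einterval x w|lborel. g t) = (LINT t:einterval x y|lborel. g t) + (LINT t:einterval y w|lborel. g t)"
    using assms by (intro I_add) auto
  also have "(LINT t:einterval y w|lborel. g t) = (LINT t:einterval y z|lborel. g t) + (LINT t:einterval z w|lborel. g t)"
    using assms by (intro I_add I_sub[OF assms(1)]) auto
  finally show ?thesis using I_nonneg[of g, OF assms(5)] by (smt (verit))
qed

lemma sqrt_tendsto0:
  fixes w :: "'a \<Rightarrow> real"
  assumes "\<And>n. 0 \<le> w n"
  shows "((\<lambda>n. sqrt (w n)) \<longlongrightarrow> 0) F \<longleftrightarrow> (w \<longlongrightarrow> 0) F"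
proof
  assume "((\<lambda>n. sqrt (w n)) \<longlongrightarrow> 0) F"
  from tendsto_mult[OF this this] show "(w \<longlongrightarrow> 0) F"
    using assms by (simp add: real_sqrt_mult[symmetric])
next
  assume "(w \<longlongrightarrow> 0) F"
  from tendsto_real_sqrt[OF this] show "((\<lambda>n. sqrt (w n)) \<longlongrightarrow> 0) F" by simp
qed

lemma L2_sq: "(L2norm S f)^2 = (LINT x:S|lborel. (cmod (f x))^2)"
  unfolding L2norm_def by (rule real_sqrt_pow2, rule I_nonneg) simp

theorem lemma3p2:
  fixes a b :: ereal and \<kappa> \<phi> :: "real \<Rightarrow> complex" and c :: "nat \<Rightarrow> ereal"
  assumes ab: "a < b"
    and meas_kappa: "set_borel_measurable lborel (einterval a b) \<kappa>"
    and meas_phi: "set_borel_measurable lborel (einterval a b) \<phi>"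
    and kappa_L2: "set_integrable lborel (einterval a b) (\<lambda>x. (cmod (\<kappa> x))^2)"
    and phi_L2: "\<And>t::real. a < ereal t \<Longrightarrow> ereal t < b \<Longrightarrow>
                   set_integrable lborel (einterval a (ereal t)) (\<lambda>x. (cmod (\<phi> x))^2)"
    and c0: "c 0 = a"
    and c_mono: "strict_mono c"
    and c_lt_b: "\<And>n. c n < b"
    and c_tail: "\<And>n. (L2norm (einterval (c n) b) \<kappa>)^2 = (1/2)^n * (L2norm (einterval a b) \<kappa>)^2"
  shows "((\<lambda>n. L2norm (einterval (c n) (c (Suc n))) \<kappa> * L2norm (einterval (c n) (c (Suc n))) \<phi>)
            \<longlonglongrightarrow> 0)
         \<longleftrightarrow> ((\<lambda>t. L2norm (einterval a t) \<phi> * L2norm (einterval t b) \<kappa>) \<longlongrightarrow> 0) (at_left b)"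
proof -
  define gk where "gk = (\<lambda>x. (cmod (\<kappa> x))^2)"
  define gp where "gp = (\<lambda>x. (cmod (\<phi> x))^2)"
  have gk0: "\<And>t. 0 \<le> gk t" and gp0: "\<And>t. 0 \<le> gp t" by (simp_all add: gk_def gp_def)
  define Q where "Q g x y = (LINT t:einterval x y|lborel. g t)" for g :: "real \<Rightarrow> real" and x y
  have Lk: "L2norm (einterval x y) \<kappa> = sqrt (Q gk x y)" for x y by (simp add: L2norm_def Q_def gk_def)
  have Lp: "L2norm (einterval x y) \<phi> = sqrt (Q gp x y)" for x y by (simp add: L2norm_def Q_def gp_def)
  have Qk0: "0 \<le> Q gk x y" for x y unfolding Q_def by (rule I_nonneg[OF gk0])
  have Qp0: "0 \<le> Q gp x y" for x y unfolding Q_def by (rule I_nonneg[OF gp0])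
  define K where "K = Q gk a b"
  have K0: "0 \<le> K" unfolding K_def by (rule Qk0)
  have intK: "set_integrable lborel (einterval a b) gk" using kappa_L2 by (simp add: gk_def)
  have cmono: "c m \<le> c n" if "m \<le> n" for m n using strict_mono_less_eq[OF c_mono] that by simp
  have ca: "a \<le> c n" for n using cmono[of 0 n] c0 by simp
  have cSa: "a < c (Suc n)" for n using strict_mono_less[OF c_mono, of 0 "Suc n"] c0 by simp
  have cb: "c n \<le> b" for n using c_lt_b[of n] by simp
  have ctail: "Q gk (c n) b = (1/2)^n * K" for n
    using c_tail[of n] unfolding L2_sq by (simp add: Q_def K_def gk_def)
  have intKc: "set_integrable lborel (einterval (c n) b) gk" for n
    by (rule I_sub[OF intK ca order_refl])
  have Kseg: "Q gk (c n) (c (Suc n)) = (1/2)^(Suc n) * K" for n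
  proof -
    have "Q gk (c n) b = Q gk (c n) (c (Suc n)) + Q gk (c (Suc n)) b"
      unfolding Q_def by (rule I_add[OF cmono cb intKc]) simp
    then show ?thesis using ctail[of n] ctail[of "Suc n"] by simp
  qed
  have intP: "set_integrable lborel (einterval a d) gp" if "a < d" "d < b" for d
  proof (cases d)
    case (real r) then show ?thesis using phi_L2[of r] that by (simp add: gp_def)
  qed (use that in auto)
  have Psum: "Q gp a (c (Suc n)) = (\<Sum>k\<le>n. Q gp (c k) (c (Suc k)))" for n
  proof (induction n)
    case 0 then show ?case using c0 by simp
  next
    case (Suc n)
    have "Q gp a (c (Suc (Suc n))) = Q gp a (c (Suc n)) + Q gp (c (Suc n)) (c (Suc (Suc n)))"
      unfolding Q_def by (rule I_add[OF ca cmono intP[OF cSa c_lt_b]]) simp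
    then show ?case using Suc by simp
  qed
  define w where "w n = (1/2)^(Suc n) * K * Q gp (c n) (c (Suc n))" for n
  have w0: "0 \<le> w n" for n unfolding w_def using K0 Qp0 by simp
  have omega: "(\<lambda>n. L2norm (einterval (c n) (c (Suc n))) \<kappa> * L2norm (einterval (c n) (c (Suc n))) \<phi>)
      = (\<lambda>n. sqrt (w n))"
    by (rule ext) (simp only: Lk Lp Kseg w_def real_sqrt_mult)
  define G where "G t = Q gp a t * Q gk t b" for t
  have G0: "0 \<le> G t" for t unfolding G_def using Qp0 Qk0 by simp
  have Fsq: "(\<lambda>t. L2norm (einterval a t) \<phi> * L2norm (einterval t b) \<kappa>) = (\<lambda>t. sqrt (G t))"
    by (rule ext) (simp only: Lk Lp G_def real_sqrt_mult)
  have Kt_mono: "Q gk t b \<le> (1/2)^n * K" if "c n \<le> t" "t \<le> b" for n t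
    unfolding ctail[of n, symmetric] Q_def
    by (rule I_mono[OF intKc[of n] that order_refl gk0])
  have half_lim: "(\<lambda>n. (1/2::real)^(Suc n)) \<longlonglongrightarrow> 0"
    by (rule LIMSEQ_Suc, rule LIMSEQ_power_zero) simp
  have main: "(w \<longlonglongrightarrow> 0) \<longleftrightarrow> (G \<longlongrightarrow> 0) (at_left b)"
  proof (cases "\<exists>d<b. \<forall>n. c n \<le> d")
    case True
    then obtain d where db: "d < b" and cd: "\<And>n. c n \<le> d" by blast
    have ad: "a < d" using cSa[of 0] cd[of 1] by simp
    define M where "M = Q gp a d"
    have wM: "w n \<le> (1/2)^(Suc n) * K * M" for n
    proof -
      have "Q gp (c n) (c (Suc n)) \<le> M" unfolding M_def Q_def
        by (rule I_mono[OF intP[OF ad db] ca cmono cd gp0]) simp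
      then show ?thesis unfolding w_def using K0 by (intro mult_left_mono) auto
    qed
    have wlim: "w \<longlonglongrightarrow> 0"
    proof (rule tendsto_sandwich[of "\<lambda>_. 0" w sequentially "\<lambda>n. (1/2)^(Suc n) * K * M"])
      show "((\<lambda>n. (1/2)^(Suc n) * K * M) \<longlonglongrightarrow> 0)"
        by (intro tendsto_mult_left_zero half_lim)
    qed (use w0 wM in auto)
    have "\<forall>\<^sub>F t in at_left b. G t = 0"
      unfolding eventually_at_left[OF db]
    proof (intro exI[of _ d] conjI allI impI)
      fix t assume dt: "d < t" "t < b"
      have "Q gk t b \<le> 0"
      proof (rule LIMSEQ_le_const[of "\<lambda>n. (1/2)^n * K"])
        show "(\<lambda>n. (1/2::real)^n * K) \<longlonglongrightarrow> 0"
          by (intro tendsto_mult_left_zero LIMSEQ_power_zero) simp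
        show "\<exists>N. \<forall>n\<ge>N. Q gk t b \<le> (1/2)^n * K"
          using Kt_mono cd dt by (meson order.trans less_imp_le)
      qed
      then show "G t = 0" unfolding G_def using Qk0[of t b] by simp
    qed (use db in auto)
    then have "(G \<longlongrightarrow> 0) (at_left b)" by (rule tendsto_eventually)
    with wlim show ?thesis by simp
  next
    case False
    then have B: "\<exists>n. d < c n" if "d < b" for d using that not_le by blast
    have clim: "c \<longlonglongrightarrow> b"
    proof (rule order_tendstoI)
      fix x assume "x < b"
      then obtain N where "x < c N" using B by blast
      then show "\<forall>\<^sub>F n in sequentially. x < c n"
        unfolding eventually_sequentially using cmono by (meson order_less_le_trans)
    next
      fix x assume "b < x"
      then show "\<forall>\<^sub>F n in sequentially. c n < x"
        using c_lt_b by (intro always_eventually) (meson order.strict_trans)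
    qed
    have cfl: "filterlim (\<lambda>n. c (Suc n)) (at_left b) sequentially"
      by (rule tendsto_imp_filterlim_at_left[OF LIMSEQ_Suc[OF clim]]) (simp add: c_lt_b)
    show ?thesis
    proof
      assume wlim: "w \<longlonglongrightarrow> 0"
      define s where "s n = (\<Sum>k\<le>n. (1/2::real)^(n-k) * w k)" for n
      have slim: "(\<lambda>n. 2 * s n) \<longlonglongrightarrow> 0"
        unfolding s_def by (intro tendsto_mult_right_zero geo_conv[OF w0 wlim])
      have Gbound: "G t \<le> 2 * s n" if "c n \<le> t" "t \<le> c (Suc n)" for n t
      proof -
        have at: "a \<le> t" using ca[of n] that by simp
        have "Q gp a t \<le> Q gp a (c (Suc n))" unfolding Q_def
          by (rule I_mono[OF intP[OF cSa c_lt_b] order_refl at that(2) gp0])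
        moreover have "Q gk t b \<le> (1/2)^n * K"
          using Kt_mono[OF that(1)] that(2) cb[of "Suc n"] by simp
        ultimately have "G t \<le> Q gp a (c (Suc n)) * ((1/2)^n * K)"
          unfolding G_def using Qp0 Qk0 by (intro mult_mono) auto
        also have "\<dots> = (\<Sum>k\<le>n. Q gp (c k) (c (Suc k)) * ((1/2)^n * K))"
          by (simp add: Psum sum_distrib_right)
        also have "\<dots> = 2 * s n"
          unfolding s_def sum_distrib_left
        proof (rule sum.cong[OF refl])
          fix k assume "k \<in> {..n}"
          then have kn: "k \<le> n" by simp
          have "(1/2::real)^n = (1/2)^(n-k) * (1/2)^k"
            using kn by (simp add: power_add[symmetric])
          then show "Q gp (c k) (c (Suc k)) * ((1/2)^n * K) = 2 * ((1/2)^(n-k) * w k)"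
            by (simp add: w_def)
        qed
        finally show ?thesis .
      qed
      show "(G \<longlongrightarrow> 0) (at_left b)"
      proof (rule tendstoI)
        fix e :: real assume e: "0 < e"
        from order_tendstoD(2)[OF slim e] obtain N where N: "\<And>n. n \<ge> N \<Longrightarrow> 2 * s n < e"
          unfolding eventually_sequentially by blast
        show "\<forall>\<^sub>F t in at_left b. dist (G t) 0 < e"
          unfolding eventually_at_left[OF c_lt_b[of N]]
        proof (intro exI[of _ "c N"] conjI allI impI)
          fix t assume t: "c N < t" "t < b"
          define m where "m = (LEAST m. t < c m)"
          have ex: "\<exists>m. t < c m" using B t by blast
          have tm: "t < c m" unfolding m_def using ex by (rule LeastI_ex)
          have "N < m"
          proof (rule ccontr)
            assume "\<not> N < m"
            then have "c m \<le> c N" using cmono by simp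
            then show False using t tm by simp
          qed
          then obtain n where mn: "m = Suc n" and nN: "N \<le> n" by (cases m) auto
          have "\<not> t < c n" unfolding m_def
            by (rule not_less_Least) (simp add: mn[unfolded m_def])
          then have "G t \<le> 2 * s n" using tm mn by (intro Gbound) auto
          then show "dist (G t) 0 < e" using N[OF nN] G0[of t] by simp
        qed (use c_lt_b in auto)
      qed
    next
      assume Glim: "(G \<longlongrightarrow> 0) (at_left b)"
      have GS: "(\<lambda>n. G (c (Suc n))) \<longlonglongrightarrow> 0" by (rule filterlim_compose[OF Glim cfl])
      have wG: "w n \<le> G (c (Suc n))" for n
      proof -
        have "Q gp (c n) (c (Suc n)) \<le> Q gp a (c (Suc n))" unfolding Q_def
          by (rule I_mono[OF intP[OF cSa c_lt_b] ca cmono order_refl gp0]) simp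
        then show ?thesis unfolding w_def G_def ctail using K0
          by (simp add: mult_left_mono mult.commute mult.left_commute)
      qed
      show "w \<longlonglongrightarrow> 0"
        by (rule tendsto_sandwich[of "\<lambda>_. 0" w sequentially "\<lambda>n. G (c (Suc n))"])
           (use w0 wG GS in auto)
    qed
  qed
  show ?thesis unfolding omega Fsq sqrt_tendsto0[OF w0] sqrt_tendsto0[OF G0] by (rule main)
qed

end
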